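(* Let $q$ be a prime power, $t\ge 1$, $B=\mathbb{F}_q$ and $F=\mathbb{F}_{q^t}$. Let $A\subseteq F$ with $|A|=n\le |F|$, let $1\le k<n$, and set $r=n-k$. Any linear repair scheme over $B$ for a single erased symbol of the Reed-Solomon code $\mathrm{RS}(A,k)$ has bandwidth at least \[ \ell \lfloor b_{\mathrm{AVE}} \rfloor + (n-1-\ell)\lceil b_{\mathrm{AVE}} \rceil \] sub-symbols over $B$, where \[ L = \frac{(r-1)(|F|-1)+(n-1)}{|F|},\qquad b_{\mathrm{AVE}} = \log_q\Big(\frac{(n-1)|F|}{(r-1)(|F|-1)+(n-1)}\Big)=\log_q\big((n-1)/L\big), \] and $\ell = n-1$ if $b_{\mathrm{AVE}}\in\mathbb{Z}$, while otherwise \[ \ell = \left\lfloor \frac{L - (n-1)q^{-\lceil b_{\mathrm{AVE}} \rceil}}{q^{-\lfloor b_{\mathrm{AVE}} \rfloor} - q^{-\lceil b_{\mathrm{AVE}} \rceil}}\right\rfloor . \]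
   Context: The Reed-Solomon code with evaluation set $A=\{\alpha_1,\dots,\alpha_n\}\subseteq F$ and dimension $k$ is $\mathrm{RS}(A,k)=\{(f(\alpha_1),\dots,f(\alpha_n)) : f\in F[x],\ \deg f<k\}$; the symbol $f(\alpha)$ is stored at a node indexed by $\alpha$. Elements of $F$ are symbols, elements of $B$ sub-symbols. Its dual code is a generalized Reed-Solomon code $\{(\lambda_1 g(\alpha_1),\dots,\lambda_n g(\alpha_n)): \deg g\le r-1\}$ for some nonzero multipliers $\lambda_i$. A linear repair scheme over $B$ for the erased symbol $f(\alpha^* )$, $\alpha^*\in A$, is one in which each remaining node $\alpha\ne\alpha^*$ sends $b_\alpha$ $B$-linear functions (sub-symbols) of its symbol, from which $f(\alpha^* )$ is recovered $B$-linearly for every codeword; its bandwidth is $\sum_{\alpha\in A\setminus\{\alpha^*\}} b_\alpha$ sub-symbols. Equivalently (Guruswami–Wootters), such a scheme corresponds to $t$ polynomials $g_1,\dots,g_t\in F[x]$ of degree at most $r-1$ with $\mathrm{rank}_B\{g_1(\alpha^* ),\dots,g_t(\alpha^* )\}=t$, its bandwidth being $\sum_{\alpha\ne\alpha^*}\mathrm{rank}_B\{g_1(\alpha),\dots,g_t(\alpha)\}$. *)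

theory Defs
  imports "HOL-Computational_Algebra.Polynomial" "HOL-Computational_Algebra.Primes" Complex_Main
begin

definition is_subfield :: "'f::field set \<Rightarrow> bool" where
  "is_subfield B \<longleftrightarrow> 0 \<in> B \<and> 1 \<in> B \<and>
     (\<forall>x\<in>B. \<forall>y\<in>B. x + y \<in> B \<and> x * y \<in> B) \<and>
     (\<forall>x\<in>B. - x \<in> B) \<and> (\<forall>x\<in>B. x \<noteq> 0 \<longrightarrow> inverse x \<in> B)"

definition B_linear_functional :: "'f::field set \<Rightarrow> ('f \<Rightarrow> 'f) \<Rightarrow> bool" where
  "B_linear_functional B phi \<longleftrightarrow> (\<forall>x. phi x \<in> B) \<and>
     (\<forall>x y. phi (x + y) = phi x + phi y) \<and>
     (\<forall>c\<in>B. \<forall>x. phi (c * x) = c * phi x)"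

text \<open>Index set of the downloaded sub-symbols: node alpha \<noteq> astar sends b alpha sub-symbols.\<close>
definition repair_index :: "'f set \<Rightarrow> 'f \<Rightarrow> ('f \<Rightarrow> nat) \<Rightarrow> ('f \<times> nat) set" where
  "repair_index A astar b = {(a, j). a \<in> A - {astar} \<and> j < b a}"

definition data_space :: "'f::field set \<Rightarrow> 'f set \<Rightarrow> 'f \<Rightarrow> ('f \<Rightarrow> nat) \<Rightarrow> ('f \<Rightarrow> nat \<Rightarrow> 'f) set" where
  "data_space B A astar b = {D. \<forall>a j. ((a, j) \<in> repair_index A astar b \<longrightarrow> D a j \<in> B) \<and>
                                    ((a, j) \<notin> repair_index A astar b \<longrightarrow> D a j = 0)}"

text \<open>Data downloaded when the stored codeword is given by polynomial f.\<close>
definition downloaded :: "'f set \<Rightarrow> 'f \<Rightarrow> ('f \<Rightarrow> nat) \<Rightarrow> ('f \<Rightarrow> nat \<Rightarrow> 'f \<Rightarrow> 'f) \<Rightarrow> 'f::field poly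
     \<Rightarrow> ('f \<Rightarrow> nat \<Rightarrow> 'f)" where
  "downloaded A astar b phi f = (\<lambda>a j. if (a, j) \<in> repair_index A astar b then phi a j (poly f a) else 0)"

definition linear_repair_scheme ::
  "'f::field set \<Rightarrow> 'f set \<Rightarrow> nat \<Rightarrow> 'f \<Rightarrow> ('f \<Rightarrow> nat) \<Rightarrow> ('f \<Rightarrow> nat \<Rightarrow> 'f \<Rightarrow> 'f)
     \<Rightarrow> (('f \<Rightarrow> nat \<Rightarrow> 'f) \<Rightarrow> 'f) \<Rightarrow> bool" where
  "linear_repair_scheme B A k astar b phi R \<longleftrightarrow>
     (\<forall>a\<in>A - {astar}. \<forall>j < b a. B_linear_functional B (phi a j)) \<and>
     (\<forall>D1\<in>data_space B A astar b. \<forall>D2\<in>data_space B A astar b.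
         R (\<lambda>a j. D1 a j + D2 a j) = R D1 + R D2) \<and>
     (\<forall>c\<in>B. \<forall>D\<in>data_space B A astar b. R (\<lambda>a j. c * D a j) = c * R D) \<and>
     (\<forall>f. degree f < k \<longrightarrow> R (downloaded A astar b phi f) = poly f astar)"

definition bandwidth :: "'f set \<Rightarrow> 'f \<Rightarrow> ('f \<Rightarrow> nat) \<Rightarrow> nat" where
  "bandwidth A astar b = (\<Sum>a\<in>A - {astar}. b a)"

end

theory Submission imports Defs begin

lemma subfield_facts:
  assumes "is_subfield B"
  shows "0 \<in> B" "1 \<in> B" "\<And>x y. x \<in> B \<Longrightarrow> y \<in> B \<Longrightarrow> x + y \<in> B"
    "\<And>x y. x \<in> B \<Longrightarrow> y \<in> B \<Longrightarrow> x * y \<in> B"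
  using assms unfolding is_subfield_def by auto

lemma repair_index_Sigma: "repair_index A astar b = Sigma (A - {astar}) (\<lambda>a. {..<b a})"
  unfolding repair_index_def by auto

lemma finite_repair_index: "finite A \<Longrightarrow> finite (repair_index A astar b)"
  unfolding repair_index_Sigma by auto

lemma R_zero:
  assumes "linear_repair_scheme B A k astar b phi R" "is_subfield B"
  shows "R (\<lambda>a j. 0) = 0"
proof -
  have z: "(\<lambda>a j. 0) \<in> data_space B A astar b"
    using subfield_facts[OF assms(2)] unfolding data_space_def by auto
  have h: "\<forall>D1\<in>data_space B A astar b. \<forall>D2\<in>data_space B A astar b.
         R (\<lambda>a j. D1 a j + D2 a j) = R D1 + R D2"
    using assms(1) unfolding linear_repair_scheme_def by blast
  have "R (\<lambda>a j. 0) = R (\<lambda>a j. 0) + R (\<lambda>a j. 0)"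
    using bspec[OF bspec[OF h z] z] by simp
  then show ?thesis by (metis add_cancel_right_right)
qed

definition evec :: "'f \<times> nat \<Rightarrow> 'f \<Rightarrow> nat \<Rightarrow> 'f::field" where
  "evec x = (\<lambda>a j. if (a, j) = x then 1 else 0)"

lemma R_sum:
  assumes sch: "linear_repair_scheme B A k astar b phi R" and sf: "is_subfield B"
    and fin: "finite A" and D: "D \<in> data_space B A astar b"
  shows "R D = (\<Sum>x\<in>repair_index A astar b. D (fst x) (snd x) * R (evec x))"
proof -
  let ?I = "repair_index A astar b"
  have add: "\<And>D1 D2. D1 \<in> data_space B A astar b \<Longrightarrow> D2 \<in> data_space B A astar b \<Longrightarrow>
      R (\<lambda>a j. D1 a j + D2 a j) = R D1 + R D2"
    and hom: "\<And>c D. c \<in> B \<Longrightarrow> D \<in> data_space B A astar b \<Longrightarrow> R (\<lambda>a j. c * D a j) = c * R D"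
    using sch unfolding linear_repair_scheme_def by blast+
  note sfs = subfield_facts[OF sf]
  have DB: "\<And>a j. (a, j) \<in> ?I \<Longrightarrow> D a j \<in> B" and D0: "\<And>a j. (a, j) \<notin> ?I \<Longrightarrow> D a j = 0"
    using D unfolding data_space_def by auto
  have main: "R (\<lambda>a j. if (a, j) \<in> J then D a j else 0) = (\<Sum>x\<in>J. D (fst x) (snd x) * R (evec x))"
    if "J \<subseteq> ?I" for J
  proof -
    have "finite J" using that finite_repair_index[OF fin] finite_subset by blast
    then show ?thesis using that
    proof (induction J rule: finite_induct)
      case empty
      then show ?case using R_zero[OF sch sf] by simp
    next
      case (insert x J)
      have m1: "(\<lambda>a j. if (a, j) \<in> J then D a j else 0) \<in> data_space B A astar b"
        using insert.prems DB sfs unfolding data_space_def by auto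
      have m2: "evec x \<in> data_space B A astar b"
        using insert.prems sfs unfolding data_space_def evec_def by auto
      have cB: "D (fst x) (snd x) \<in> B" using insert.prems DB by (cases x) auto
      have eq: "(\<lambda>a j. if (a, j) \<in> insert x J then D a j else 0) =
          (\<lambda>a j. (if (a, j) \<in> J then D a j else 0) + (\<lambda>a j. D (fst x) (snd x) * evec x a j) a j)"
        using insert.hyps by (auto simp: evec_def fun_eq_iff)
      have m3: "(\<lambda>a j. D (fst x) (snd x) * evec x a j) \<in> data_space B A astar b"
        using m2 cB sfs unfolding data_space_def by auto
      show ?case
        unfolding eq add[OF m1 m3] hom[OF cB m2] using insert by simp
    qed
  qed
  have "(\<lambda>a j. if (a, j) \<in> ?I then D a j else 0) = D" using D0 by (auto simp: fun_eq_iff)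
  then show ?thesis using main[of ?I] by simp
qed

lemma blf_zero: "B_linear_functional B th \<Longrightarrow> th 0 = 0"
  unfolding B_linear_functional_def by (metis add_0 add_cancel_right_right)

lemma blf_sum: "B_linear_functional B th \<Longrightarrow> th (\<Sum>x\<in>S. g x) = (\<Sum>x\<in>S. th (g x))"
proof (induction S rule: infinite_finite_induct)
  case (infinite A) then show ?case by (simp add: blf_zero)
next
  case empty then show ?case by (simp add: blf_zero)
next
  case (insert x F) then show ?case unfolding B_linear_functional_def by simp
qed

lemma blf_diff: "B_linear_functional B th \<Longrightarrow> th (x - y) = th x - th y"
  unfolding B_linear_functional_def by (metis add_diff_cancel_right' diff_add_cancel eq_diff_eq)

lemma downloaded_in:
  assumes sch: "linear_repair_scheme B A k astar b phi R"
  shows "downloaded A astar b phi f \<in> data_space B A astar b"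
  using sch unfolding linear_repair_scheme_def data_space_def downloaded_def repair_index_def
    B_linear_functional_def by auto

lemma recover:
  assumes sch: "linear_repair_scheme B A k astar b phi R" and sf: "is_subfield B"
    and fin: "finite A" and f: "degree f < k"
  shows "poly f astar = (\<Sum>x\<in>repair_index A astar b.
            phi (fst x) (snd x) (poly f (fst x)) * R (evec x))"
proof -
  have "poly f astar = R (downloaded A astar b phi f)"
    using sch f unfolding linear_repair_scheme_def by auto
  also have "\<dots> = (\<Sum>x\<in>repair_index A astar b.
            downloaded A astar b phi f (fst x) (snd x) * R (evec x))"
    by (rule R_sum[OF sch sf fin downloaded_in[OF sch]])
  also have "\<dots> = (\<Sum>x\<in>repair_index A astar b.
            phi (fst x) (snd x) (poly f (fst x)) * R (evec x))"
    by (rule sum.cong) (auto simp: downloaded_def)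
  finally show ?thesis .
qed

lemma exists_theta:
  assumes sch: "linear_repair_scheme B A k astar b phi R" and sf: "is_subfield B" and k: "1 \<le> k"
  shows "\<exists>a j z. (a, j) \<in> repair_index A astar b \<and> phi a j z \<noteq> 0"
proof (rule ccontr)
  assume "\<not> ?thesis"
  then have "downloaded A astar b phi 1 = (\<lambda>a j. 0)"
    unfolding downloaded_def by (auto simp: fun_eq_iff)
  moreover have "R (downloaded A astar b phi 1) = poly 1 astar"
    using sch k unfolding linear_repair_scheme_def by auto
  ultimately show False using R_zero[OF sch sf] by simp
qed

lemma theta_identity:
  assumes sch: "linear_repair_scheme B A k astar b phi R" and sf: "is_subfield B"
    and fin: "finite A" and f: "degree f < k" and th: "B_linear_functional B th"
  shows "th (beta * poly f astar) = (\<Sum>a\<in>A - {astar}. \<Sum>j<b a.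
            phi a j (poly f a) * th (beta * R (evec (a, j))))"
proof -
  have phiB: "\<And>a j x. a \<in> A - {astar} \<Longrightarrow> j < b a \<Longrightarrow> phi a j x \<in> B"
    using sch unfolding linear_repair_scheme_def B_linear_functional_def by blast
  have "th (beta * poly f astar) = th (\<Sum>x\<in>repair_index A astar b.
            phi (fst x) (snd x) (poly f (fst x)) * (beta * R (evec x)))"
    unfolding recover[OF sch sf fin f] sum_distrib_left by (simp add: ac_simps)
  also have "\<dots> = (\<Sum>x\<in>repair_index A astar b.
            phi (fst x) (snd x) (poly f (fst x)) * th (beta * R (evec x)))"
    unfolding blf_sum[OF th]
    by (rule sum.cong) (use th phiB in \<open>auto simp: repair_index_def B_linear_functional_def\<close>)
  also have "\<dots> = (\<Sum>a\<in>A - {astar}. \<Sum>j<b a.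
            phi a j (poly f a) * th (beta * R (evec (a, j))))"
    unfolding repair_index_Sigma using fin by (subst sum.Sigma) (auto simp: case_prod_beta)
  finally show ?thesis .
qed

lemma Z_bound:
  assumes sch: "linear_repair_scheme B A k astar b phi R" and sf: "is_subfield B"
    and fin: "finite A" and th: "B_linear_functional B th" and z: "th z \<noteq> 0"
    and beta: "beta \<noteq> 0" and astar: "astar \<in> A" and k: "1 \<le> k" "k < card A"
  shows "card {a \<in> A - {astar}. \<forall>j<b a. th (beta * R (evec (a, j))) = 0} \<le> card A - k - 1"
proof (rule ccontr)
  define Z where "Z = {a \<in> A - {astar}. \<forall>j<b a. th (beta * R (evec (a, j))) = 0}"
  define S where "S = A - {astar} - Z"
  assume "\<not> ?thesis"
  then have cZ: "card Z \<ge> card A - k" unfolding Z_def by simp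
  have ZA: "Z \<subseteq> A - {astar}" unfolding Z_def by auto
  have cA: "card (A - {astar}) = card A - 1" using astar fin by simp
  have "card S = card (A - {astar}) - card Z" unfolding S_def
    using ZA fin by (simp add: card_Diff_subset finite_subset)
  then have cS: "card S < k" using cZ cA k by linarith
  define P where "P = (\<Prod>s\<in>S. [:- s, 1:])"
  have degP: "degree P = card S" unfolding P_def
    by (subst degree_prod_sum_eq) auto
  have PA: "poly P astar \<noteq> 0" unfolding P_def poly_prod using fin
    by (subst prod_zero_iff) (auto simp: S_def)
  have PS: "\<And>s. s \<in> S \<Longrightarrow> poly P s = 0" unfolding P_def poly_prod using fin
    by (subst prod_zero_iff) (auto simp: S_def)
  define f where "f = smult (z / beta / poly P astar) P"
  have degf: "degree f < k" unfolding f_def using degP cS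
    by (metis degree_smult_le le_less_trans)
  have "th (beta * poly f astar) = th z" unfolding f_def using PA beta by simp
  also have "th (beta * poly f astar) = (\<Sum>a\<in>A - {astar}. \<Sum>j<b a.
            phi a j (poly f a) * th (beta * R (evec (a, j))))"
    by (rule theta_identity[OF sch sf fin degf th])
  also have "\<dots> = 0"
  proof (rule sum.neutral, rule ballI, rule sum.neutral, rule ballI)
    fix a j assume a: "a \<in> A - {astar}" and j: "j \<in> {..<b a}"
    show "phi a j (poly f a) * th (beta * R (evec (a, j))) = 0"
    proof (cases "a \<in> Z")
      case True then show ?thesis using j unfolding Z_def by auto
    next
      case False
      then have "a \<in> S" using a unfolding S_def by auto
      then have "poly f a = 0" unfolding f_def using PS by simp
      moreover have "B_linear_functional B (phi a j)"
        using sch a j unfolding linear_repair_scheme_def by auto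
      ultimately show ?thesis using blf_zero[of B "phi a j"] by simp
    qed
  qed
  finally show False using z by simp
qed

lemma kernel_card:
  fixes th :: "'f::{field,finite} \<Rightarrow> 'f" and c :: "nat \<Rightarrow> 'f"
  assumes th: "B_linear_functional B th"
  shows "card (UNIV :: 'f set) \<le> card B ^ m * card {beta. \<forall>j<m. th (beta * c j) = 0}"
proof -
  define h where "h = (\<lambda>beta. map (\<lambda>j. th (beta * c j)) [0..<m])"
  define N where "N = {beta. \<forall>j<m. th (beta * c j) = 0}"
  define L where "L = {xs. set xs \<subseteq> B \<and> length xs = m}"
  define sig where "sig = (\<lambda>v. SOME beta. h beta = v)"
  define g where "g = (\<lambda>beta. (h beta, beta - sig (h beta)))"
  have hs: "h (sig (h beta)) = h beta" for beta unfolding sig_def by (rule someI) auto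
  have key: "beta - beta' \<in> N" if "h beta = h beta'" for beta beta'
  proof -
    have "th (beta * c j) = th (beta' * c j)" if "j < m" for j
      using \<open>h beta = h beta'\<close> that unfolding h_def
      by (metis (no_types, lifting) add_0 diff_zero length_map length_upt nth_map nth_upt)
    then show ?thesis unfolding N_def
      by (auto simp: left_diff_distrib blf_diff[OF th])
  qed
  have inj: "inj g" unfolding g_def inj_def by auto
  have img: "range g \<subseteq> L \<times> N"
  proof
    fix y assume "y \<in> range g"
    then obtain beta where y: "y = g beta" by auto
    have "h beta \<in> L" using th unfolding h_def L_def B_linear_functional_def by auto
    moreover have "beta - sig (h beta) \<in> N" using key[of beta "sig (h beta)"] hs by simp
    ultimately show "y \<in> L \<times> N" unfolding y g_def by simp
  qed
  have finB: "finite B" by simp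
  have "card (UNIV :: 'f set) = card (range g)" using inj by (simp add: card_image)
  also have "\<dots> \<le> card (L \<times> N)" using img by (intro card_mono) (auto simp: L_def intro!: finite_lists_length_eq)
  also have "\<dots> = card B ^ m * card N" unfolding L_def card_cartesian_product
    by (simp add: card_lists_length_eq)
  finally show ?thesis unfolding N_def .
qed

lemma counting:
  fixes A :: "'f::{field,finite} set"
  assumes sch: "linear_repair_scheme B A k astar b phi R" and sf: "is_subfield B"
    and th: "B_linear_functional B th" and z: "th z \<noteq> 0"
    and astar: "astar \<in> A" and k: "1 \<le> k" "k < card A"
  shows "(\<Sum>a\<in>A - {astar}. card {beta. \<forall>j<b a. th (beta * R (evec (a, j))) = 0} - 1)
          \<le> (card (UNIV :: 'f set) - 1) * (card A - k - 1)"
proof -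
  define P where "P = (\<lambda>a beta. \<forall>j<b a. th (beta * R (evec (a, j))) = 0)"
  define U where "U = (UNIV :: 'f set) - {0}"
  have fin: "finite A" by simp
  have "(\<Sum>a\<in>A - {astar}. card {beta. P a beta} - 1) = (\<Sum>a\<in>A - {astar}. \<Sum>beta\<in>{beta\<in>U. P a beta}. 1::nat)"
  proof (rule sum.cong)
    fix a assume "a \<in> A - {astar}"
    have "P a 0" unfolding P_def using blf_zero[OF th] by simp
    then have "{beta\<in>U. P a beta} = {beta. P a beta} - {0}" unfolding U_def by auto
    then show "card {beta. P a beta} - 1 = (\<Sum>beta\<in>{beta\<in>U. P a beta}. 1::nat)"
      using \<open>P a 0\<close> by simp
  qed simp
  also have "\<dots> = (\<Sum>beta\<in>U. \<Sum>a\<in>{a\<in>A - {astar}. P a beta}. 1::nat)"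
    by (rule sum.swap_restrict) auto
  also have "\<dots> \<le> (\<Sum>beta\<in>U. card A - k - 1)"
  proof (rule sum_mono)
    fix beta assume "beta \<in> U"
    then have "beta \<noteq> 0" unfolding U_def by simp
    then show "(\<Sum>a\<in>{a\<in>A - {astar}. P a beta}. 1::nat) \<le> card A - k - 1"
      using Z_bound[OF sch sf fin th z _ astar k] unfolding P_def by simp
  qed
  also have "\<dots> = (card (UNIV :: 'f set) - 1) * (card A - k - 1)" unfolding U_def by simp
  finally show ?thesis unfolding P_def .
qed



lemma chord_base:
  fixes q :: real and u :: int
  assumes q: "q > 1"
  shows "q powr (- of_int u) \<ge> 1 - of_int u * (1 - 1 / q)"
proof (cases "u \<ge> 0")
  case True
  then obtain v :: nat where u: "u = int v" by (metis nonneg_eq_int)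
  have "1 + real v * (1/q - 1) \<le> (1 + (1/q - 1)) ^ v"
    by (rule Bernoulli_inequality) (use q in simp)
  also have "\<dots> = q powr (- real v)" using q
    by (simp add: powr_minus powr_realpow power_divide divide_inverse power_inverse)
  finally show ?thesis unfolding u by (simp add: algebra_simps)
next
  case False
  define v where "v = nat (- u)"
  have u: "u = - int v" using False unfolding v_def by simp
  have "1 + real v * (q - 1) \<le> (1 + (q - 1)) ^ v"
    by (rule Bernoulli_inequality) (use q in simp)
  also have "\<dots> = q powr (real v)" using q by (simp add: powr_realpow)
  finally have h: "1 + real v * (q - 1) \<le> q powr real v" .
  have "1 - 1/q \<le> q - 1"
  proof -
    have "(q - 1) - (1 - 1/q) = (q - 1)^2 / q" using q by (simp add: field_simps power2_eq_square)
    also have "\<dots> \<ge> 0" using q by simp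
    finally show ?thesis by simp
  qed
  then have "real v * (1 - 1/q) \<le> real v * (q - 1)" by (rule mult_left_mono) simp
  then show ?thesis unfolding u using h by simp
qed

lemma chord:
  fixes q :: real and m :: int and c :: nat
  assumes q: "q > 1"
  shows "q powr (- real c) \<ge> q powr (- of_int m) - (real c - of_int m) * (q powr (- of_int m) - q powr (- of_int m - 1))"
proof -
  have e1: "q powr (- real c) = q powr (- of_int m) * q powr (- of_int (int c - m))"
    using q by (simp add: powr_add[symmetric])
  have e2: "q powr (- of_int m - 1) = q powr (- of_int m) * (1 / q)"
    using q powr_diff[of q "- of_int m" 1] by (simp add: divide_inverse)
  have pos: "q powr (- of_int m) > 0" using q by simp
  have h0: "q powr (- of_int m) * (1 - of_int (int c - m) * (1 - 1 / q)) \<le> q powr (- of_int m) * q powr (- of_int (int c - m))"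
    by (rule mult_left_mono[OF chord_base[OF q]]) (use pos in simp)
  have e3: "of_int (int c - m) = real c - of_int m" by simp
  have id: "\<And>p x::real. p - x * (p - p * (1 / q)) = p * (1 - x * (1 - 1 / q))"
    by (simp add: right_diff_distrib)
  have "q powr (- of_int m) - (real c - of_int m) * (q powr (- of_int m) - q powr (- of_int m - 1))
     = q powr (- of_int m) * (1 - of_int (int c - m) * (1 - 1 / q))"
    unfolding e2 e3 by (rule id)
  also note h0
  also have "q powr (- of_int m) * q powr (- of_int (int c - m)) = q powr (- real c)"
    by (rule e1[symmetric])
  finally show ?thesis .
qed

lemma final_real:
  fixes q L :: real and b :: "'a \<Rightarrow> nat" and S :: "'a set" and bave :: real
  assumes q: "q > 1" and fin: "finite S" and L: "L > 0" and N: "card S > 0"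
    and hs: "(\<Sum>a\<in>S. q powr (- real (b a))) \<le> L"
    and bave: "bave = log q (real (card S) / L)"
  shows "let l = (if bave \<in> \<int> then int (card S)
              else \<lfloor>(L - real (card S) * q powr (- of_int \<lceil>bave\<rceil>)) /
                     (q powr (- of_int \<lfloor>bave\<rfloor>) - q powr (- of_int \<lceil>bave\<rceil>))\<rfloor>)
     in real (\<Sum>a\<in>S. b a) \<ge>
          of_int l * of_int \<lfloor>bave\<rfloor> + (real (card S) - of_int l) * of_int \<lceil>bave\<rceil>"
proof -
  define m where "m = \<lfloor>bave\<rfloor>"
  define N where "N = real (card S)"
  define pm where "pm = q powr (- of_int m)"
  define pM where "pM = q powr (- of_int m - 1)"
  define d where "d = pm - pM"
  define Sb where "Sb = real (\<Sum>a\<in>S. b a)"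
  have Npos: "N > 0" using N unfolding N_def by simp
  have pMe: "pM = pm / q" unfolding pM_def pm_def using q powr_diff[of q "- of_int m" 1] by simp
  have pmpos: "pm > 0" unfolding pm_def using q by simp
  have dpos: "d > 0" unfolding d_def pMe using pmpos q by (simp add: field_simps)
  have "(\<Sum>a\<in>S. pm - (real (b a) - of_int m) * d) \<le> (\<Sum>a\<in>S. q powr (- real (b a)))"
    by (rule sum_mono) (use chord[OF q] in \<open>simp add: pm_def d_def pM_def\<close>)
  also note hs
  finally have "(\<Sum>a\<in>S. pm - (real (b a) - of_int m) * d) \<le> L" .
  moreover have "(\<Sum>a\<in>S. pm - (real (b a) - of_int m) * d) = N * pm - (Sb - N * of_int m) * d"
    unfolding N_def Sb_def by (simp add: sum_subtractf sum_distrib_right[symmetric] left_diff_distrib)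
  ultimately have key: "(Sb - N * of_int m) * d \<ge> N * pm - L" by linarith
  have NL: "N / L > 0" using Npos L by simp
  show ?thesis
  proof (cases "bave \<in> \<int>")
    case True
    then have fl: "\<lfloor>bave\<rfloor> = bave" "\<lceil>bave\<rceil> = bave"
      by (auto elim: Ints_cases)
    have "q powr bave = N / L" unfolding bave N_def using q NL N_def by simp
    then have "pm = L / N" unfolding pm_def m_def fl using q by (simp add: powr_minus)
    then have "N * pm - L = 0" using Npos by simp
    then have "Sb - N * of_int m \<ge> 0" using key dpos
      by (simp add: zero_le_mult_iff)
    then have "Sb \<ge> N * of_int m" by simp
    moreover have l: "(if bave \<in> \<int> then int (card S)
              else \<lfloor>(L - real (card S) * q powr (- of_int \<lceil>bave\<rceil>)) /
                     (q powr (- of_int \<lfloor>bave\<rfloor>) - q powr (- of_int \<lceil>bave\<rceil>))\<rfloor>) = int (card S)"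
      using True by (simp only: if_True)
    ultimately show ?thesis unfolding Let_def l by (simp add: Sb_def N_def m_def)
  next
    case False
    have ce: "\<lceil>bave\<rceil> = m + 1"
    proof -
      have "of_int \<lfloor>bave\<rfloor> \<noteq> bave" using False by (metis Ints_of_int)
      then show ?thesis unfolding m_def by (simp add: ceiling_altdef)
    qed
    have pMe2: "q powr (- of_int \<lceil>bave\<rceil>) = pM" unfolding ce pM_def
      by (rule arg_cong[where f = "\<lambda>e. q powr e"]) simp
    define x where "x = (L - N * pM) / d"
    have "N * pm - L = N * d - x * d" unfolding x_def d_def using dpos d_def
      by (simp add: field_simps)
    then have "(Sb - N * of_int m) * d \<ge> (N - x) * d" using key by (simp add: algebra_simps)
    then have "Sb - N * of_int m \<ge> N - x" using dpos by simp
    then have h1: "of_int (int (card S) - (int (\<Sum>a\<in>S. b a) - int (card S) * m)) \<le> x"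
      unfolding Sb_def N_def by simp
    have "int (card S) - (int (\<Sum>a\<in>S. b a) - int (card S) * m) \<le> \<lfloor>x\<rfloor>"
      using h1 by (simp only: le_floor_iff)
    then have "real_of_int (int (card S) - (int (\<Sum>a\<in>S. b a) - int (card S) * m)) \<le> of_int \<lfloor>x\<rfloor>"
      by linarith
    then have "N - (Sb - N * of_int m) \<le> of_int \<lfloor>x\<rfloor>" unfolding Sb_def N_def by simp
    then have "Sb \<ge> of_int \<lfloor>x\<rfloor> * of_int m + (N - of_int \<lfloor>x\<rfloor>) * (of_int m + 1)"
      by (simp add: algebra_simps)
    note fin_ineq = this
    have xe: "(L - real (card S) * pM) / (q powr (- of_int \<lfloor>bave\<rfloor>) - pM) = x"
      unfolding x_def d_def pm_def m_def N_def ..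
    have l: "(if bave \<in> \<int> then int (card S)
              else \<lfloor>(L - real (card S) * q powr (- of_int \<lceil>bave\<rceil>)) /
                     (q powr (- of_int \<lfloor>bave\<rfloor>) - q powr (- of_int \<lceil>bave\<rceil>))\<rfloor>) = \<lfloor>x\<rfloor>"
      using False unfolding pMe2 xe by (simp only: if_False)
    show ?thesis using fin_ineq unfolding Let_def unfolding l unfolding ce m_def[symmetric]
      unfolding Sb_def N_def by simp
  qed
qed


theorem proposition1:
  fixes B :: "'f::{field,finite} set" and A :: "'f set" and q t n k :: nat and astar :: 'f
    and b :: "'f \<Rightarrow> nat" and phi :: "'f \<Rightarrow> nat \<Rightarrow> 'f \<Rightarrow> 'f" and R :: "('f \<Rightarrow> nat \<Rightarrow> 'f) \<Rightarrow> 'f"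
  assumes q_pp: "\<exists>p m. prime p \<and> m > 0 \<and> q = p ^ m"
    and t: "t \<ge> 1"
    and B_sub: "is_subfield B" and B_card: "card B = q"
    and F_card: "card (UNIV :: 'f set) = q ^ t"
    and A_card: "card A = n" and n_le: "n \<le> card (UNIV :: 'f set)"
    and k: "1 \<le> k" "k < n"
    and astar: "astar \<in> A"
    and scheme: "linear_repair_scheme B A k astar b phi R"
  shows
    "let r = n - k; Fc = real (card (UNIV :: 'f set));
         L = (real (r - 1) * (Fc - 1) + real (n - 1)) / Fc;
         bave = log (real q) ((real n - 1) * Fc / (real (r - 1) * (Fc - 1) + real (n - 1)));
         l = (if bave \<in> \<int> then int (n - 1)
              else \<lfloor>(L - (real n - 1) * real q powr (- of_int \<lceil>bave\<rceil>)) /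
                     (real q powr (- of_int \<lfloor>bave\<rfloor>) - real q powr (- of_int \<lceil>bave\<rceil>))\<rfloor>)
     in real (bandwidth A astar b) \<ge>
          of_int l * of_int \<lfloor>bave\<rfloor> + (real n - 1 - of_int l) * of_int \<lceil>bave\<rceil>"
proof -
  define Fc where "Fc = real (card (UNIV :: 'f set))"
  define r where "r = n - k"
  define L where "L = (real (r - 1) * (Fc - 1) + real (n - 1)) / Fc"
  define S where "S = A - {astar}"
  have kA: "1 \<le> k" "k < card A" using k A_card by auto
  have fin: "finite A" by simp
  note sfs = subfield_facts[OF B_sub]
  have "{0, 1} \<subseteq> B" using sfs by auto
  then have "card {0::'f, 1} \<le> card B" by (intro card_mono) auto
  then have q2: "q \<ge> 2" using B_card by simp
  then have q1: "real q > 1" by simp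
  obtain a0 j0 z where a0: "(a0, j0) \<in> repair_index A astar b" and z: "phi a0 j0 z \<noteq> 0"
    using exists_theta[OF scheme B_sub k(1)] by blast
  define th where "th = phi a0 j0"
  have th: "B_linear_functional B th" using a0 scheme unfolding th_def linear_repair_scheme_def repair_index_def by auto
  define N where "N = (\<lambda>a. card {beta::'f. \<forall>j<b a. th (beta * R (evec (a, j))) = 0})"
  have cnt: "(\<Sum>a\<in>S. N a - 1) \<le> (card (UNIV :: 'f set) - 1) * (card A - k - 1)"
    unfolding S_def N_def using counting[OF scheme B_sub th z[folded th_def] astar kA] by simp
  have N1: "N a \<ge> 1" for a
  proof -
    have "0 \<in> {beta::'f. \<forall>j<b a. th (beta * R (evec (a, j))) = 0}" using blf_zero[OF th] by simp
    then have "N a > 0" unfolding N_def by (subst card_gt_0_iff) (intro conjI; (blast | simp))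
    then show ?thesis by simp
  qed
  have kc: "card (UNIV :: 'f set) \<le> q ^ b a * N a" for a
    unfolding N_def B_card[symmetric] by (rule kernel_card[OF th])
  have Fpos: "Fc > 0" unfolding Fc_def by (simp add: card_gt_0_iff)
  have cS: "card S = n - 1" unfolding S_def using astar A_card by simp
  have "(\<Sum>a\<in>S. Fc * real q powr (- real (b a)) - 1) \<le> (\<Sum>a\<in>S. real (N a - 1))"
  proof (rule sum_mono)
    fix a
    have "Fc \<le> real q ^ b a * real (N a)" using kc[of a] unfolding Fc_def
      by (metis of_nat_le_iff of_nat_mult of_nat_power)
    then have "Fc * real q powr (- real (b a)) \<le> real (N a)"
      using q1 by (simp add: powr_minus powr_realpow field_simps)
    then show "Fc * real q powr (- real (b a)) - 1 \<le> real (N a - 1)" using N1[of a] by simp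
  qed
  also have "\<dots> = real (\<Sum>a\<in>S. N a - 1)" by simp
  also have "\<dots> \<le> real ((card (UNIV :: 'f set) - 1) * (card A - k - 1))"
    using cnt by linarith
  also have "\<dots> = (Fc - 1) * real (r - 1)"
  proof -
    have "card (UNIV :: 'f set) \<ge> 1" using Fpos unfolding Fc_def by linarith
    then show ?thesis unfolding Fc_def r_def A_card by (simp add: of_nat_diff)
  qed
  finally have "Fc * (\<Sum>a\<in>S. real q powr (- real (b a))) - real (n - 1) \<le> (Fc - 1) * real (r - 1)"
    by (simp add: sum_subtractf sum_distrib_left cS)
  then have hs: "(\<Sum>a\<in>S. real q powr (- real (b a))) \<le> L"
    unfolding L_def using Fpos by (simp add: field_simps)
  have F1: "Fc \<ge> 1"
  proof -
    have "card (UNIV :: 'f set) \<ge> 1" using Fpos unfolding Fc_def by linarith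
    then show ?thesis unfolding Fc_def by simp
  qed
  have Lpos: "L > 0" unfolding L_def using Fpos F1 k by (intro divide_pos_pos add_nonneg_pos) auto
  have Npos: "card S > 0" using cS k by simp
  note fr = final_real[OF q1 _ Lpos Npos hs refl]
  have e1: "real (card S) / L = (real n - 1) * Fc / (real (r - 1) * (Fc - 1) + real (n - 1))"
    unfolding L_def cS using k by (simp add: of_nat_diff)
  have e2: "real (card S) = real n - 1" using cS k by (simp add: of_nat_diff)
  have e3: "bandwidth A astar b = (\<Sum>a\<in>S. b a)" unfolding bandwidth_def S_def ..
  show ?thesis using fr[simplified e1] unfolding Let_def e2 e3 cS[symmetric] L_def Fc_def r_def
    by simp
qed

end
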